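(* Fix an integer $n\ge1$. Let $M$ be a $2\times2$ matrix-valued function satisfying all conditions of the model problem described in the context except that condition (2) is replaced by the requirement that $M$ is holomorphic in a neighbourhood of $p\equiv0\bmod\Lambda_\tau$. Then $M\equiv0$.
   Context: Let $\tau\in i\mathbb{R}_{>0}$, $\Lambda_\tau=\mathbb{Z}+\tau\mathbb{Z}$, and fix $\mathscr D\in(0,1)$. For $p$ on a line $\{\mathrm{Im}\,p=(k+\tfrac12)\mathrm{Im}\,\tau\}$, $p_\pm$ denote boundary values from above/below. Model problem (for given $n$): a $2\times2$ matrix-valued function $M$ on $\mathbb{C}\setminus\bigcup_{k\in\mathbb Z}\{\mathrm{Im}\,p=(k+\tfrac12)\mathrm{Im}\,\tau\}$, meromorphic there, such that: (1) $M(p+1)=(-1)^{n-1}M(p)$, $M(p+\tau)=M(p)$; (2) near $p\equiv0\bmod\Lambda_\tau$, $M(p)=\begin{bmatrix}p^{-1}+\mathcal O(1)&\mathcal O(1)\\\mathcal O(1)&p^{-1}+\mathcal O(1)\end{bmatrix}$; (3) near $p\equiv\mathscr D\bmod\Lambda_\tau$ the first column is $\mathcal O((p-\mathscr D)^{-1})$ and the second column is $\mathcal O(p-\mathscr D)$; (4) no other poles; (5) continuous boundary values on the lines with $M(p_+)=M(p_-)\begin{bmatrix}0&1\\-1&0\end{bmatrix}$. *)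

theory Defs
  imports "HOL-Complex_Analysis.Complex_Analysis" "HOL-Library.Landau_Symbols"
begin

definition lattice :: "complex \<Rightarrow> complex set" where
  "lattice \<tau> = {of_int a + of_int b * \<tau> | a b. True}"

definition cuts :: "complex \<Rightarrow> complex set" where
  "cuts \<tau> = {p. \<exists>k::int. Im p = (of_int k + 1/2) * Im \<tau>}"

definition Jmat :: "complex^2^2" where
  "Jmat = (\<chi> i j. if i = 1 \<and> j = 2 then 1 else if i = 2 \<and> j = 1 then -1 else 0)"

end

theory Submission
  imports Defs
begin


locale ell =
  fixes \<tau> :: complex and D :: real
  assumes tau: "Re \<tau> = 0" "Im \<tau> > 0" and Dpos: "0 < D" "D < 1"
begin

abbreviation "h \<equiv> Im \<tau>"
abbreviation "P \<equiv> (\<lambda>w. complex_of_real D + w) ` lattice \<tau>"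
abbreviation "C \<equiv> cuts \<tau>"

lemma hpos: "h > 0" using tau by simp

lemma tau_eq: "\<tau> = \<i> * of_real h"
  using tau by (simp add: complex_eq_iff)

lemma cuts_iff: "p \<in> C \<longleftrightarrow> (\<exists>k::int. Im p = (of_int k + 1/2) * h)"
  by (simp add: cuts_def)

lemma P_iff: "p \<in> P \<longleftrightarrow> (\<exists>a b::int. Re p = D + of_int a \<and> Im p = of_int b * h)"
proof
  assume "p \<in> P"
  then obtain a b :: int where "p = D + (of_int a + of_int b * \<tau>)"
    by (auto simp: lattice_def)
  then show "\<exists>a b::int. Re p = D + of_int a \<and> Im p = of_int b * h"
    using tau by (intro exI[of _ a] exI[of _ b]) auto
next
  assume "\<exists>a b::int. Re p = D + of_int a \<and> Im p = of_int b * h"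
  then obtain a b :: int where ab: "Re p = D + of_int a" "Im p = of_int b * h" by blast
  have "p = complex_of_real D + (of_int a + of_int b * \<tau>)"
    using ab tau by (simp add: complex_eq_iff)
  then show "p \<in> P" unfolding lattice_def by blast
qed

lemma cuts_cos: "C = {p. cos (pi * Im p / h) = 0}"
proof -
  have "(\<exists>k::int. Im p = (of_int k + 1/2) * h) \<longleftrightarrow> (\<exists>i::int. odd i \<and> pi * Im p / h = of_int i * (pi/2))" for p
  proof
    assume "\<exists>k::int. Im p = (of_int k + 1/2) * h"
    then obtain k :: int where k: "Im p = (of_int k + 1/2) * h" by blast
    show "\<exists>i::int. odd i \<and> pi * Im p / h = of_int i * (pi/2)"
      by (rule exI[of _ "2*k+1"]) (use hpos k in \<open>auto simp: field_simps\<close>)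
  next
    assume "\<exists>i::int. odd i \<and> pi * Im p / h = of_int i * (pi/2)"
    then obtain i :: int where i: "odd i" "pi * Im p / h = of_int i * (pi/2)" by blast
    obtain k where k: "i = 2*k+1" using i(1) oddE by blast
    have "Im p = of_int i / 2 * h" using i(2) hpos by (simp add: field_simps)
    then show "\<exists>k::int. Im p = (of_int k + 1/2) * h" using k by (intro exI[of _ k]) (simp add: field_simps)
  qed
  then show ?thesis by (auto simp: cuts_iff cos_zero_iff_int)
qed

lemma closed_C: "closed C"
  unfolding cuts_cos by (intro closed_Collect_eq continuous_intros) (use hpos in auto)

lemma P_sin: "P = {p. sin (pi * (Re p - D)) = 0 \<and> sin (pi * Im p / h) = 0}"
proof -
  have e1: "(\<exists>a::int. x = D + of_int a) \<longleftrightarrow> sin (pi * (x - D)) = 0" for x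
  proof -
    have "(\<exists>a::int. x = D + of_int a) \<longleftrightarrow> (\<exists>a::int. pi * (x - D) = of_int a * pi)"
    proof (intro ex_cong1)
      fix a :: int
      have "pi * (x - D) = of_int a * pi \<longleftrightarrow> pi * (x - D) = pi * of_int a" by (simp add: mult.commute)
      also have "\<dots> \<longleftrightarrow> x - D = of_int a" by simp
      finally show "x = D + of_int a \<longleftrightarrow> pi * (x - D) = of_int a * pi" by auto
    qed
    then show ?thesis by (simp add: sin_zero_iff_int2)
  qed
  have e2: "(\<exists>b::int. y = of_int b * h) \<longleftrightarrow> sin (pi * y / h) = 0" for y
  proof -
    have "(\<exists>b::int. y = of_int b * h) \<longleftrightarrow> (\<exists>b::int. pi * y / h = of_int b * pi)"
      using hpos by (intro ex_cong1) (auto simp: field_simps)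
    then show ?thesis by (simp add: sin_zero_iff_int2)
  qed
  show ?thesis
    unfolding P_iff set_eq_iff mem_Collect_eq e1[symmetric] e2[symmetric] by blast
qed

lemma closed_P: "closed P"
proof -
  have "P = {p. sin (pi * (Re p - D)) = 0} \<inter> {p. sin (pi * Im p / h) = 0}" by (simp add: P_sin Collect_conj_eq)
  also have "closed \<dots>" by (intro closed_Int closed_Collect_eq continuous_intros) (use hpos in auto)
  finally show ?thesis .
qed

lemma open_G: "open (- C - P)"
  using closed_C closed_P by (simp add: open_Diff open_Compl)


lemma int_abs_lt1: "\<bar>real_of_int m\<bar> < 1 \<Longrightarrow> m = 0"
proof -
  assume "\<bar>real_of_int m\<bar> < 1"
  then have "real_of_int \<bar>m\<bar> < real_of_int 1" by simp
  then have "\<bar>m\<bar> < 1" by (simp only: of_int_less_iff)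
  then show "m = 0" by simp
qed

lemma int_between: "real_of_int k < real_of_int j + 1/2 \<Longrightarrow> real_of_int j + 1/2 < real_of_int k + 1 \<Longrightarrow> j = k"
proof -
  assume a: "real_of_int k < real_of_int j + 1/2" "real_of_int j + 1/2 < real_of_int k + 1"
  have "real_of_int k < real_of_int (j + 1)" using a by simp
  then have "k < j + 1" by (simp only: of_int_less_iff)
  moreover have "real_of_int j < real_of_int (k + 1)" using a by simp
  then have "j < k + 1" by (simp only: of_int_less_iff)
  ultimately show "j = k" by simp
qed

lemma int_not_between: "real_of_int k < real_of_int b \<Longrightarrow> real_of_int b < real_of_int k + 1 \<Longrightarrow> False"
proof -
  assume a: "real_of_int k < real_of_int b" "real_of_int b < real_of_int k + 1"
  then have "k < b" by (simp only: of_int_less_iff)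
  moreover have "real_of_int b < real_of_int (k + 1)" using a by simp
  then have "b < k + 1" by (simp only: of_int_less_iff)
  ultimately show False by simp
qed

lemma C_plus1: "p + 1 \<in> C \<longleftrightarrow> p \<in> C" by (simp add: cuts_iff)
lemma C_minus1: "p - 1 \<in> C \<longleftrightarrow> p \<in> C" by (simp add: cuts_iff)
lemma C_plustau: "p + \<tau> \<in> C \<longleftrightarrow> p \<in> C"
proof -
  have "(\<exists>k::int. Im p + h = (of_int k + 1/2) * h) \<longleftrightarrow> (\<exists>k::int. Im p = (of_int k + 1/2) * h)"
  proof
    assume "\<exists>k::int. Im p + h = (of_int k + 1/2) * h"
    then obtain k::int where "Im p + h = (of_int k + 1/2) * h" by blast
    then show "\<exists>k::int. Im p = (of_int k + 1/2) * h" by (intro exI[of _ "k - 1"]) (simp add: algebra_simps)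
  next
    assume "\<exists>k::int. Im p = (of_int k + 1/2) * h"
    then obtain k::int where "Im p = (of_int k + 1/2) * h" by blast
    then show "\<exists>k::int. Im p + h = (of_int k + 1/2) * h" by (intro exI[of _ "k + 1"]) (simp add: algebra_simps)
  qed
  then show ?thesis by (simp add: cuts_iff)
qed
lemma C_minustau: "p - \<tau> \<in> C \<longleftrightarrow> p \<in> C"
  using C_plustau[of "p - \<tau>"] by simp
lemma C_refl: "complex_of_real (2*D) - p \<in> C \<longleftrightarrow> p \<in> C"
proof -
  have "(\<exists>k::int. - Im p = (of_int k + 1/2) * h) \<longleftrightarrow> (\<exists>k::int. Im p = (of_int k + 1/2) * h)"
  proof
    assume "\<exists>k::int. - Im p = (of_int k + 1/2) * h"
    then obtain k::int where "- Im p = (of_int k + 1/2) * h" by blast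
    then show "\<exists>k::int. Im p = (of_int k + 1/2) * h" by (intro exI[of _ "- k - 1"]) (simp add: algebra_simps)
  next
    assume "\<exists>k::int. Im p = (of_int k + 1/2) * h"
    then obtain k::int where "Im p = (of_int k + 1/2) * h" by blast
    then show "\<exists>k::int. - Im p = (of_int k + 1/2) * h" by (intro exI[of _ "- k - 1"]) (simp add: algebra_simps)
  qed
  then show ?thesis by (simp add: cuts_iff)
qed

lemma P_plus1: "p + 1 \<in> P \<longleftrightarrow> p \<in> P"
proof -
  have "(\<exists>a b::int. Re p + 1 = D + of_int a \<and> Im p = of_int b * h) \<longleftrightarrow> (\<exists>a b::int. Re p = D + of_int a \<and> Im p = of_int b * h)"
  proof
    assume "\<exists>a b::int. Re p + 1 = D + of_int a \<and> Im p = of_int b * h"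
    then obtain a b::int where "Re p + 1 = D + of_int a \<and> Im p = of_int b * h" by blast
    then show "\<exists>a b::int. Re p = D + of_int a \<and> Im p = of_int b * h" by (intro exI[of _ "a - 1"] exI[of _ b]) simp
  next
    assume "\<exists>a b::int. Re p = D + of_int a \<and> Im p = of_int b * h"
    then obtain a b::int where "Re p = D + of_int a \<and> Im p = of_int b * h" by blast
    then show "\<exists>a b::int. Re p + 1 = D + of_int a \<and> Im p = of_int b * h" by (intro exI[of _ "a + 1"] exI[of _ b]) simp
  qed
  then show ?thesis by (simp add: P_iff)
qed
lemma P_plustau: "p + \<tau> \<in> P \<longleftrightarrow> p \<in> P"
proof -
  have "(\<exists>a b::int. Re p = D + of_int a \<and> Im p + h = of_int b * h) \<longleftrightarrow> (\<exists>a b::int. Re p = D + of_int a \<and> Im p = of_int b * h)"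
  proof
    assume "\<exists>a b::int. Re p = D + of_int a \<and> Im p + h = of_int b * h"
    then obtain a b::int where "Re p = D + of_int a \<and> Im p + h = of_int b * h" by blast
    then show "\<exists>a b::int. Re p = D + of_int a \<and> Im p = of_int b * h" by (intro exI[of _ a] exI[of _ "b - 1"]) (simp add: algebra_simps)
  next
    assume "\<exists>a b::int. Re p = D + of_int a \<and> Im p = of_int b * h"
    then obtain a b::int where "Re p = D + of_int a \<and> Im p = of_int b * h" by blast
    then show "\<exists>a b::int. Re p = D + of_int a \<and> Im p + h = of_int b * h" by (intro exI[of _ a] exI[of _ "b + 1"]) (simp add: algebra_simps)
  qed
  then show ?thesis using tau by (simp add: P_iff)
qed
lemma P_refl: "complex_of_real (2*D) - p \<in> P \<longleftrightarrow> p \<in> P"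
proof -
  have "(\<exists>a b::int. 2*D - Re p = D + of_int a \<and> - Im p = of_int b * h) \<longleftrightarrow> (\<exists>a b::int. Re p = D + of_int a \<and> Im p = of_int b * h)"
  proof
    assume "\<exists>a b::int. 2*D - Re p = D + of_int a \<and> - Im p = of_int b * h"
    then obtain a b::int where "2*D - Re p = D + of_int a \<and> - Im p = of_int b * h" by blast
    then show "\<exists>a b::int. Re p = D + of_int a \<and> Im p = of_int b * h" by (intro exI[of _ "-a"] exI[of _ "-b"]) (simp add: algebra_simps)
  next
    assume "\<exists>a b::int. Re p = D + of_int a \<and> Im p = of_int b * h"
    then obtain a b::int where "Re p = D + of_int a \<and> Im p = of_int b * h" by blast
    then show "\<exists>a b::int. 2*D - Re p = D + of_int a \<and> - Im p = of_int b * h" by (intro exI[of _ "-a"] exI[of _ "-b"]) (simp add: algebra_simps)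
  qed
  then show ?thesis by (simp add: P_iff)
qed

lemma D_in_P: "complex_of_real D \<in> P" by (simp add: P_iff)
lemma D_notin_C: "complex_of_real D \<notin> C"
proof
  assume "complex_of_real D \<in> C"
  then obtain k::int where "0 = (of_int k + 1/2) * h" by (auto simp: cuts_iff)
  then have "of_int k + 1/2 = (0::real)" using hpos by simp
  then have "real_of_int (2*k+1) = 0" by simp
  then have "2*k+1 = 0" by (simp only: of_int_eq_0_iff)
  then show False by presburger
qed
lemma zero_notin_C: "0 \<notin> C"
proof
  assume "0 \<in> C"
  then obtain k::int where "0 = (of_int k + 1/2) * h" by (auto simp: cuts_iff)
  then have "of_int k + 1/2 = (0::real)" using hpos by simp
  then have "real_of_int (2*k+1) = 0" by simp
  then have "2*k+1 = 0" by (simp only: of_int_eq_0_iff)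
  then show False by presburger
qed
lemma zero_notin_P: "0 \<notin> P"
proof
  assume "0 \<in> P"
  then obtain a::int where "0 = D + of_int a" by (auto simp: P_iff)
  then have "real_of_int a = - D" by simp
  then show False using Dpos int_not_between[of "-1" a] by simp
qed

definition rr where "rr = min 1 h / 2"
lemma rr_pos: "rr > 0" using hpos by (simp add: rr_def)

lemma ball_P:
  assumes z: "z \<in> P" and y: "y \<in> ball z rr"
  shows "y \<notin> C" "y \<in> P \<Longrightarrow> y = z"
proof -
  obtain a b :: int where ab: "Re z = D + of_int a" "Im z = of_int b * h" using z by (auto simp: P_iff)
  have d: "norm (y - z) < rr" using y by (simp add: dist_norm norm_minus_commute)
  have re: "\<bar>Re y - Re z\<bar> < rr" using abs_Re_le_cmod[of "y - z"] d by simp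
  have im: "\<bar>Im y - Im z\<bar> < rr" using abs_Im_le_cmod[of "y - z"] d by simp
  have rr1: "rr \<le> 1/2" "rr \<le> h/2" by (auto simp: rr_def)
  show "y \<notin> C"
  proof
    assume "y \<in> C"
    then obtain k::int where k: "Im y = (of_int k + 1/2) * h" by (auto simp: cuts_iff)
    have "\<bar>(of_int k + 1/2 - of_int b) * h\<bar> < h/2" using im k ab rr1 by (simp add: algebra_simps)
    then have "\<bar>of_int k + 1/2 - of_int b\<bar> < (1/2::real)" using hpos by (simp add: abs_mult)
    then have A: "real_of_int k + 1/2 - real_of_int b < 1/2 \<and> - (real_of_int k + 1/2 - real_of_int b) < 1/2"
      by (simp only: abs_less_iff)
    have "real_of_int (b - 1) < real_of_int k" "real_of_int k < real_of_int (b - 1) + 1" using A by simp_all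
    then show False by (rule int_not_between)
  qed
  assume "y \<in> P"
  then obtain a' b' :: int where ab': "Re y = D + of_int a'" "Im y = of_int b' * h" by (auto simp: P_iff)
  have "\<bar>real_of_int (a' - a)\<bar> < 1" using re ab ab' rr1 by simp
  then have "a' = a" using int_abs_lt1 by force
  have "\<bar>(of_int b' - of_int b) * h\<bar> < h" using im ab ab' rr1 by (simp add: algebra_simps)
  then have "\<bar>real_of_int (b' - b)\<bar> < 1" using hpos by (simp add: abs_mult)
  then have "b' = b" using int_abs_lt1 by force
  show "y = z" using ab ab' \<open>a' = a\<close> \<open>b' = b\<close> by (simp add: complex_eq_iff)
qed

definition band :: "int \<Rightarrow> complex set" where
  "band k = {y. of_int k * h < Im y \<and> Im y < (of_int k + 1) * h}"

lemma open_band: "open (band k)"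
  unfolding band_def by (intro open_Collect_conj open_Collect_less continuous_intros)

lemma band_C: "y \<in> band k \<Longrightarrow> y \<in> C \<Longrightarrow> Im y = (of_int k + 1/2) * h"
proof -
  assume y: "y \<in> band k" "y \<in> C"
  then obtain j::int where j: "Im y = (of_int j + 1/2) * h" by (auto simp: cuts_iff)
  have "of_int k * h < (of_int j + 1/2) * h" "(of_int j + 1/2) * h < (of_int k + 1) * h"
    using y(1) j by (auto simp: band_def)
  then have "real_of_int k < of_int j + 1/2" "of_int j + 1/2 < real_of_int k + 1"
    using hpos mult_less_cancel_right_pos by blast+
  then have "j = k" by (rule int_between)
  then show ?thesis using j by simp
qed

lemma band_P: "y \<in> band k \<Longrightarrow> y \<notin> P"
proof
  assume y: "y \<in> band k" "y \<in> P"
  then obtain a b::int where ab: "Im y = of_int b * h" by (auto simp: P_iff)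
  have "of_int k * h < of_int b * h" "of_int b * h < (of_int k + 1) * h"
    using y(1) ab by (auto simp: band_def)
  then have "real_of_int k < of_int b" "of_int b < real_of_int k + 1"
    using hpos mult_less_cancel_right_pos by blast+
  then show False by (rule int_not_between)
qed

lemma C_band: "x \<in> C \<Longrightarrow> \<exists>k. x \<in> band k \<and> Im x = (of_int k + 1/2) * h"
proof -
  assume "x \<in> C"
  then obtain k::int where k: "Im x = (of_int k + 1/2) * h" by (auto simp: cuts_iff)
  then show ?thesis using hpos by (intro exI[of _ k]) (auto simp: band_def algebra_simps)
qed

end



lemma shift_int:
  fixes f :: "complex \<Rightarrow> 'b"
  assumes A1: "\<And>p. p \<in> A \<Longrightarrow> p + a \<in> A" and A2: "\<And>p. p \<in> A \<Longrightarrow> p - a \<in> A"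
    and fa: "\<And>p. p \<in> A \<Longrightarrow> f (p + a) = f p" and p: "p \<in> A"
  shows "p + of_int n * a \<in> A \<and> f (p + of_int n * a) = f p"
proof -
  have pos: "p + of_nat m * a \<in> A \<and> f (p + of_nat m * a) = f p" for m
  proof (induction m)
    case 0 then show ?case using p by simp
  next
    case (Suc m)
    have e: "p + of_nat (Suc m) * a = (p + of_nat m * a) + a" by (simp add: algebra_simps)
    show ?case unfolding e using Suc A1 fa by simp
  qed
  have neg: "p - of_nat m * a \<in> A \<and> f (p - of_nat m * a) = f p" for m
  proof (induction m)
    case 0 then show ?case using p by simp
  next
    case (Suc m)
    have e: "p - of_nat (Suc m) * a = (p - of_nat m * a) - a" by (simp add: algebra_simps)
    have "f ((p - of_nat m * a) - a) = f ((p - of_nat m * a) - a + a)"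
      using fa[of "(p - of_nat m * a) - a"] Suc A2 by simp
    then show ?case unfolding e using Suc A2 by simp
  qed
  obtain m where "n = int m \<or> n = - int m" by (metis int_cases2)
  then show ?thesis using pos[of m] neg[of m] by auto
qed

lemma ev_within: "eventually P (at x) \<Longrightarrow> eventually P (at x within S)"
  unfolding eventually_at_filter by (auto elim: eventually_mono)

context ell
begin

lemma lattice_shift:
  fixes f :: "complex \<Rightarrow> 'b"
  assumes per1: "\<And>p. p \<notin> C \<Longrightarrow> f (p + 1) = f p" and pert: "\<And>p. p \<notin> C \<Longrightarrow> f (p + \<tau>) = f p"
    and w: "w \<in> lattice \<tau>" and p: "p \<notin> C"
  shows "p + w \<notin> C \<and> f (p + w) = f p"
proof -
  obtain a b :: int where wab: "w = of_int a + of_int b * \<tau>" using w by (auto simp: lattice_def)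
  have s1: "p + of_int a * 1 \<in> - C \<and> f (p + of_int a * 1) = f p"
    by (rule shift_int) (use p per1 C_plus1 C_minus1 in auto)
  have s2: "(p + of_int a) + of_int b * \<tau> \<in> - C \<and> f ((p + of_int a) + of_int b * \<tau>) = f (p + of_int a)"
    by (rule shift_int) (use s1 pert C_plustau C_minustau in auto)
  show ?thesis using s1 s2 wab by (simp add: add.assoc)
qed

lemma paste_band:
  fixes f fb :: "complex \<Rightarrow> complex"
  assumes holf: "f holomorphic_on (-C-P)" and fbc: "continuous_on C fb"
    and up: "\<And>x. x \<in> C \<Longrightarrow> x \<in> band k \<Longrightarrow> (f \<longlongrightarrow> fb x) (at x within {p. Im p > Im x})"
    and dn: "\<And>x. x \<in> C \<Longrightarrow> x \<in> band k \<Longrightarrow> (f \<longlongrightarrow> fb x) (at x within {p. Im p < Im x})"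
  shows "(\<lambda>p. if p \<in> C then fb p else f p) holomorphic_on band k"
proof -
  define F where "F = (\<lambda>p. if p \<in> C then fb p else f p)"
  have FG: "p \<notin> C \<Longrightarrow> F p = f p" for p by (simp add: F_def)
  have contf: "continuous_on (-C-P) f" using holf by (rule holomorphic_on_imp_continuous_on)
  have isContF_G: "(F \<longlongrightarrow> F y) (at y)" if y: "y \<notin> C" "y \<notin> P" for y
  proof -
    have 1: "(f \<longlongrightarrow> F y) (at y)"
      using contf open_G y FG[OF y(1)] by (simp add: continuous_on_eq_continuous_at isCont_def)
    have "eventually (\<lambda>x. f x = F x) (at y)"
    proof -
      have "eventually (\<lambda>x. x \<in> -C-P) (at y)" using open_G y by (intro eventually_at_in_open') auto
      then show ?thesis by eventually_elim (auto simp: F_def)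
    qed
    then show ?thesis by (rule Lim_transform_eventually[OF 1])
  qed
    define c where "c = (of_int k + 1/2) * h"
    have bandC: "y \<in> band k \<Longrightarrow> y \<in> C \<longleftrightarrow> Im y = c" for y
      using band_C[of y k] by (auto simp: c_def cuts_iff)
    have holsub: "F holomorphic_on (band k \<inter> S)" if S: "S \<inter> {y. Im y = c} = {}" for S
    proof -
      have sub: "band k \<inter> S \<subseteq> -C-P" using bandC band_P S by blast
      have "f holomorphic_on (band k \<inter> S)" using holomorphic_on_subset[OF holf sub] .
      then show ?thesis by (rule holomorphic_transform) (use sub FG in auto)
    qed
    have cont: "continuous_on (band k) F"
    proof (rule continuous_on_eq_continuous_at[THEN iffD2, OF open_band], intro ballI)
      fix y assume y: "y \<in> band k"
      show "isCont F y"
      proof (cases "y \<in> C")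
        case False
        then show ?thesis using isContF_G[of y] band_P[OF y] by (simp add: isCont_def)
      next
        case yC: True
        then have yc: "Im y = c" using bandC y by blast
        have Fy: "F y = fb y" using yC by (simp add: F_def)
        have evb: "eventually (\<lambda>p. p \<in> band k) (at y within S)" for S
          using open_band y by (rule ev_within[OF eventually_at_in_open'])
        have lup: "(F \<longlongrightarrow> fb y) (at y within {p. Im p > Im y})"
        proof -
          have "eventually (\<lambda>p. f p = F p) (at y within {p. Im p > Im y})"
            using evb[of "{p. Im p > Im y}"] unfolding eventually_at_filter
            by eventually_elim (use bandC band_P yc in \<open>auto simp: F_def\<close>)
          then show ?thesis by (rule Lim_transform_eventually[OF up[OF yC y]])
        qed
        have ldn: "(F \<longlongrightarrow> fb y) (at y within {p. Im p < Im y})"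
        proof -
          have "eventually (\<lambda>p. f p = F p) (at y within {p. Im p < Im y})"
            using evb[of "{p. Im p < Im y}"] unfolding eventually_at_filter
            by eventually_elim (use bandC band_P yc in \<open>auto simp: F_def\<close>)
          then show ?thesis by (rule Lim_transform_eventually[OF dn[OF yC y]])
        qed
        have lon: "(F \<longlongrightarrow> fb y) (at y within {p. Im p = Im y})"
        proof -
          have sub: "{p. Im p = Im y} \<subseteq> C" using yc by (auto simp: c_def cuts_iff)
          have "(fb \<longlongrightarrow> fb y) (at y within C)" using fbc yC by (simp add: continuous_on_def)
          then have "(fb \<longlongrightarrow> fb y) (at y within {p. Im p = Im y})" by (rule tendsto_within_subset) (rule sub)
          moreover have "eventually (\<lambda>p. fb p = F p) (at y within {p. Im p = Im y})"
            unfolding eventually_at_filter by (intro always_eventually) (use sub in \<open>auto simp: F_def\<close>)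
          ultimately show ?thesis by (rule Lim_transform_eventually)
        qed
        have U: "UNIV = {p. Im p > Im y} \<union> {p. Im p < Im y} \<union> {p. Im p = Im y}"
          by (rule set_eqI, rule iffI, rule_tac x="Im x" and y="Im y" in linorder_cases) auto
        have "(F \<longlongrightarrow> fb y) (at y within UNIV)"
          unfolding U Lim_within_Un using lup ldn lon by blast
        then show ?thesis using Fy by (simp add: isCont_def)
      qed
    qed
    have "F holomorphic_on band k"
    proof (rule holomorphic_on_paste_across_line[OF open_band, where d = \<i> and k = c])
      show "F holomorphic_on band k \<inter> {z. \<i> \<bullet> z < c}" by (rule holsub) auto
      show "F holomorphic_on band k \<inter> {z. c < \<i> \<bullet> z}" by (rule holsub) auto
    qed (use cont in auto)
  then show ?thesis by (simp add: F_def)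
qed

lemma LA:
  fixes f fb :: "complex \<Rightarrow> complex" and l :: complex
  assumes holf: "f holomorphic_on (-C - P)"
    and per1: "\<And>p. p \<notin> C \<Longrightarrow> f (p + 1) = f p" and pert: "\<And>p. p \<notin> C \<Longrightarrow> f (p + \<tau>) = f p"
    and lim: "(f \<longlongrightarrow> l) (at (complex_of_real D))"
    and fbc: "continuous_on C fb"
    and up: "\<And>x. x \<in> C \<Longrightarrow> (f \<longlongrightarrow> fb x) (at x within {p. Im p > Im x})"
    and dn: "\<And>x. x \<in> C \<Longrightarrow> (f \<longlongrightarrow> fb x) (at x within {p. Im p < Im x})"
  shows "\<exists>c. \<forall>p. p \<notin> C \<longrightarrow> p \<notin> P \<longrightarrow> f p = c"
proof -
  have limP: "(f \<longlongrightarrow> l) (at z)" if z: "z \<in> P" for z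
  proof -
    obtain w where w: "w \<in> lattice \<tau>" "z = complex_of_real D + w" using z by blast
    have mw: "- w \<in> lattice \<tau>"
    proof -
      obtain a b :: int where "w = of_int a + of_int b * \<tau>" using w by (auto simp: lattice_def)
      then have "- w = of_int (-a) + of_int (-b) * \<tau>" by simp
      then show ?thesis unfolding lattice_def by blast
    qed
    have "((\<lambda>x. f (x + (- w))) \<longlongrightarrow> l) (at (complex_of_real D - (- w)))"
      by (rule LIM_offset[OF lim])
    then have 1: "((\<lambda>x. f (x - w)) \<longlongrightarrow> l) (at z)" using w by simp
    have zC: "z \<notin> C" using ball_P(1)[OF z, of z] rr_pos by simp
    have "eventually (\<lambda>x. x \<in> - C) (at z)"
      using closed_C zC by (intro eventually_at_in_open') auto
    then have "eventually (\<lambda>x. f (x - w) = f x) (at z)"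
      by eventually_elim (use lattice_shift[OF per1 pert mw] in auto)
    then show ?thesis by (rule Lim_transform_eventually[OF 1])
  qed
  define F where "F = (\<lambda>p. if p \<in> C then fb p else if p \<in> P then l else f p)"
  have FG: "p \<notin> C \<Longrightarrow> p \<notin> P \<Longrightarrow> F p = f p" for p by (simp add: F_def)
  have contf: "continuous_on (-C-P) f" using holf by (rule holomorphic_on_imp_continuous_on)
  have isContF_G: "(F \<longlongrightarrow> F y) (at y)" if y: "y \<notin> C" "y \<notin> P" for y
  proof -
    have 1: "(f \<longlongrightarrow> F y) (at y)"
      using contf open_G y FG[OF y] by (simp add: continuous_on_eq_continuous_at isCont_def)
    have "eventually (\<lambda>x. f x = F x) (at y)"
    proof -
      have "eventually (\<lambda>x. x \<in> -C-P) (at y)" using open_G y by (intro eventually_at_in_open') auto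
      then show ?thesis by eventually_elim (auto simp: F_def)
    qed
    then show ?thesis by (rule Lim_transform_eventually[OF 1])
  qed
  have loc: "\<exists>T. open T \<and> x \<in> T \<and> F holomorphic_on T" for x
  proof (cases "x \<in> C")
    case True
    then obtain k where k: "x \<in> band k" "Im x = (of_int k + 1/2) * h" using C_band by blast
    have "(\<lambda>p. if p \<in> C then fb p else f p) holomorphic_on band k"
      by (rule paste_band[OF holf fbc up dn])
    then have "F holomorphic_on band k"
      by (rule holomorphic_transform) (use band_P in \<open>auto simp: F_def\<close>)
    then show ?thesis using k open_band by blast
  next
    case xC: False
    show ?thesis
    proof (cases "x \<in> P")
      case xP: True
      have sub: "ball x rr - {x} \<subseteq> -C-P" using ball_P[OF xP] by blast
      have h1: "F holomorphic_on ball x rr - {x}"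
        using holomorphic_on_subset[OF holf sub] by (rule holomorphic_transform) (use sub FG in auto)
      have "eventually (\<lambda>p. f p = F p) (at x)"
      proof -
        have "eventually (\<lambda>p. p \<in> ball x rr - {x}) (at x)" using rr_pos by (intro eventually_at_in_open) auto
        then show ?thesis by eventually_elim (use sub FG in auto)
      qed
      then have h2: "F \<midarrow>x\<rightarrow> l" by (rule Lim_transform_eventually[OF limP[OF xP]])
      have "(\<lambda>y. if y = x then l else F y) holomorphic_on ball x rr"
        by (rule removable_singularity[OF h1 _ h2]) auto
      then have "F holomorphic_on ball x rr"
        by (rule holomorphic_transform) (use xC xP in \<open>auto simp: F_def\<close>)
      then show ?thesis using rr_pos by (intro exI[of _ "ball x rr"]) auto
    next
      case xP: False
      have "F holomorphic_on (-C-P)" by (rule holomorphic_transform[OF holf]) (use FG in auto)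
      then show ?thesis using open_G xC xP by blast
    qed
  qed
  have holF: "F holomorphic_on UNIV"
    unfolding holomorphic_on_def
  proof
    fix x :: complex
    obtain T where "open T" "x \<in> T" "F holomorphic_on T" using loc by blast
    then have "F field_differentiable (at x)" using holomorphic_on_imp_differentiable_at by blast
    then show "F field_differentiable (at x within UNIV)" by simp
  qed
  have G0: "- C - P \<noteq> {}" using zero_notin_C zero_notin_P by blast
  have Fper: "F (p + a) = F p" if a: "a = 1 \<or> a = \<tau>" for p a
  proof (rule analytic_continuation_open[of "-C-P" UNIV "\<lambda>p. F (p + a)" F])
    have "(F \<circ> (\<lambda>p. p + a)) holomorphic_on UNIV"
      by (rule holomorphic_on_compose) (auto intro: holomorphic_intros holomorphic_on_subset[OF holF])
    then show "(\<lambda>p. F (p + a)) holomorphic_on UNIV" by (simp add: o_def)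
    show "F (z + a) = F z" if z: "z \<in> -C-P" for z
      using z a per1 pert C_plus1 C_plustau P_plus1 P_plustau FG by auto
  qed (use open_G G0 holF in auto)
  define K where "K = {p. 0 \<le> Re p \<and> Re p \<le> 1 \<and> 0 \<le> Im p \<and> Im p \<le> h}"
  have "compact K"
  proof (rule compact_eq_bounded_closed[THEN iffD2], rule conjI)
    have "K \<subseteq> cball 0 (1 + h)"
    proof
      fix p assume "p \<in> K"
      then have "cmod p \<le> \<bar>Re p\<bar> + \<bar>Im p\<bar>" "\<bar>Re p\<bar> \<le> 1" "\<bar>Im p\<bar> \<le> h" using cmod_le[of p] by (auto simp: K_def)
      then show "p \<in> cball 0 (1 + h)" by simp
    qed
    then show "bounded K" using bounded_cball bounded_subset by blast
    show "closed K" unfolding K_def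
      by (intro closed_Collect_conj closed_Collect_le continuous_intros)
  qed
  then have bK: "bounded (F ` K)"
    using holomorphic_on_imp_continuous_on[OF holF] by (intro compact_imp_bounded compact_continuous_image) (auto intro: continuous_on_subset)
  have "range F \<subseteq> F ` K"
  proof
    fix y assume "y \<in> range F"
    then obtain p where p: "y = F p" by blast
    define a where "a = \<lfloor>Re p\<rfloor>"
    define b where "b = \<lfloor>Im p / h\<rfloor>"
    define q where "q = p - of_int a - of_int b * \<tau>"
    have s1: "q + of_int b * \<tau> \<in> UNIV \<and> F (q + of_int b * \<tau>) = F q"
      by (rule shift_int) (use Fper[where a=\<tau>] in \<open>auto simp del: of_int_mult\<close>)
    have s2: "(q + of_int b * \<tau>) + of_int a * 1 \<in> UNIV \<and> F ((q + of_int b * \<tau>) + of_int a * 1) = F (q + of_int b * \<tau>)"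
      by (rule shift_int) (use Fper[where a=1] in auto)
    have "F p = F q" using s1 s2 by (simp add: q_def algebra_simps)
    moreover have "q \<in> K"
    proof -
      have "of_int a \<le> Re p" "Re p < of_int a + 1" using floor_correct[of "Re p"] by (auto simp: a_def)
      moreover have "of_int b \<le> Im p / h" "Im p / h < of_int b + 1" using floor_correct[of "Im p / h"] by (auto simp: b_def)
      then have "of_int b * h \<le> Im p" "Im p < (of_int b + 1) * h" using hpos by (auto simp: field_simps)
      ultimately show ?thesis using tau by (auto simp: K_def q_def algebra_simps)
    qed
    ultimately show "y \<in> F ` K" using p by blast
  qed
  then have "bounded (range F)" using bK bounded_subset by blast
  then have "F constant_on UNIV" using Liouville_theorem[OF holF] by blast
  then obtain c where c: "\<And>p. F p = c" unfolding constant_on_def by blast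
  show ?thesis using c FG by (intro exI[of _ c]) metis
qed

end



lemma nontriv_below: "at (x::complex) within {p. Im p < Im x} \<noteq> bot"
proof -
  have "x islimpt {p. Im p < Im x}"
    unfolding islimpt_approachable
  proof (intro allI impI)
    fix e :: real assume e: "e > 0"
    show "\<exists>x'\<in>{p. Im p < Im x}. x' \<noteq> x \<and> dist x' x < e"
      by (rule bexI[of _ "x - \<i> * of_real (e/2)"]) (use e in \<open>auto simp: dist_norm norm_mult\<close>)
  qed
  then show ?thesis using trivial_limit_within by blast
qed

lemma nontriv_above: "at (x::complex) within {p. Im p > Im x} \<noteq> bot"
proof -
  have "x islimpt {p. Im p > Im x}"
    unfolding islimpt_approachable
  proof (intro allI impI)
    fix e :: real assume e: "e > 0"
    show "\<exists>x'\<in>{p. Im p > Im x}. x' \<noteq> x \<and> dist x' x < e"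
      by (rule bexI[of _ "x + \<i> * of_real (e/2)"]) (use e in \<open>auto simp: dist_norm norm_mult\<close>)
  qed
  then show ?thesis using trivial_limit_within by blast
qed

context ell
begin

definition Rect where "Rect = {p. D - 1 < Re p \<and> Re p < D \<and> - (h/2) < Im p \<and> Im p < h/2}"

lemma Rect_G: "p \<in> Rect \<Longrightarrow> p \<notin> C \<and> p \<notin> P"
proof
  assume p: "p \<in> Rect"
  show "p \<notin> C"
  proof
    assume "p \<in> C"
    then obtain j::int where j: "Im p = (of_int j + 1/2) * h" by (auto simp: cuts_iff)
    have "(- 1/2) * h < (of_int j + 1/2) * h" "(of_int j + 1/2) * h < (1/2) * h" using p j by (auto simp: Rect_def)
    then have "- 1/2 < real_of_int j + 1/2" "real_of_int j + 1/2 < 1/2" using hpos mult_less_cancel_right_pos by blast+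
    then have "- 1 < real_of_int j" "real_of_int j < 0" by simp_all
    then show False using int_not_between[of "-1" j] by simp
  qed
  show "p \<notin> P"
  proof
    assume "p \<in> P"
    then obtain a b::int where ab: "Re p = D + of_int a" by (auto simp: P_iff)
    have "- 1 < real_of_int a" "real_of_int a < 0" using p ab by (auto simp: Rect_def)
    then show False using int_not_between[of "-1" a] by simp
  qed
qed

lemma convex_Rect: "convex Rect"
proof -
  have eq: "Rect = {x. inner 1 x > D - 1} \<inter> {x. inner 1 x < D} \<inter> {x. inner \<i> x > -(h/2)} \<inter> {x. inner \<i> x < h/2}"
    by (auto simp: Rect_def)
  show ?thesis unfolding eq by (intro convex_Int convex_halfspace_lt convex_halfspace_gt)
qed

lemma LI:
  fixes g gp gm :: "complex \<Rightarrow> complex" and \<epsilon> c l :: complex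
  assumes holg: "g holomorphic_on (-C-P)"
    and per1: "\<And>p. p \<notin> C \<Longrightarrow> g (p + 1) = \<epsilon> * g p" and pert: "\<And>p. p \<notin> C \<Longrightarrow> g (p + \<tau>) = g p"
    and eps: "\<epsilon> ^ 4 = 1"
    and lim: "(g \<longlongrightarrow> l) (at (complex_of_real D))"
    and gpc: "continuous_on C gp" and gmc: "continuous_on C gm"
    and up: "\<And>x. x \<in> C \<Longrightarrow> (g \<longlongrightarrow> gp x) (at x within {p. Im p > Im x})"
    and dn: "\<And>x. x \<in> C \<Longrightarrow> (g \<longlongrightarrow> gm x) (at x within {p. Im p < Im x})"
    and jump: "\<And>x. x \<in> C \<Longrightarrow> gp x = c * gm x" and c4: "c ^ 4 = 1" and c1: "c \<noteq> 1"
  shows "\<forall>p. p \<notin> C \<longrightarrow> p \<notin> P \<longrightarrow> g p = 0"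
proof -
  have "\<exists>k. \<forall>p. p \<notin> C \<longrightarrow> p \<notin> P \<longrightarrow> (g p) ^ 4 = k"
  proof (rule LA[where fb = "\<lambda>x. (gm x) ^ 4" and l = "l ^ 4"])
    show "(\<lambda>p. g p ^ 4) holomorphic_on - C - P" using holg by (intro holomorphic_intros)
    show "g (p + 1) ^ 4 = g p ^ 4" if "p \<notin> C" for p using per1[OF that] eps by (simp add: power_mult_distrib)
    show "g (p + \<tau>) ^ 4 = g p ^ 4" if "p \<notin> C" for p using pert[OF that] by simp
    show "((\<lambda>p. g p ^ 4) \<longlongrightarrow> l ^ 4) (at (complex_of_real D))" using lim by (intro tendsto_intros)
    show "continuous_on C (\<lambda>x. gm x ^ 4)" using gmc by (intro continuous_intros)
    show "((\<lambda>p. g p ^ 4) \<longlongrightarrow> gm x ^ 4) (at x within {p. Im p > Im x})" if x: "x \<in> C" for x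
    proof -
      have "((\<lambda>p. g p ^ 4) \<longlongrightarrow> gp x ^ 4) (at x within {p. Im p > Im x})" using up[OF x] by (intro tendsto_intros)
      also have "gp x ^ 4 = gm x ^ 4" using jump[OF x] c4 by (simp add: power_mult_distrib)
      finally show ?thesis .
    qed
    show "((\<lambda>p. g p ^ 4) \<longlongrightarrow> gm x ^ 4) (at x within {p. Im p < Im x})" if x: "x \<in> C" for x
      using dn[OF x] by (intro tendsto_intros)
  qed
  then obtain k where k: "\<And>p. p \<notin> C \<Longrightarrow> p \<notin> P \<Longrightarrow> (g p) ^ 4 = k" by blast
  have "g constant_on Rect"
  proof (rule continuous_finite_range_constant)
    show "connected Rect" using convex_Rect by (rule convex_connected)
    show "continuous_on Rect g"
      by (rule continuous_on_subset[OF holomorphic_on_imp_continuous_on[OF holg]]) (use Rect_G in auto)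
    have "g ` Rect \<subseteq> {z. z ^ 4 = k}" using k Rect_G by auto
    then show "finite (g ` Rect)" using finite_nth_roots[of 4 k] finite_subset by auto
  qed
  then obtain c3 where c3: "\<And>p. p \<in> Rect \<Longrightarrow> g p = c3" unfolding constant_on_def by blast
  define x0 where "x0 = complex_of_real (D - 1/2) + \<i> * of_real (h/2)"
  have x0C: "x0 \<in> C" unfolding cuts_iff x0_def by (intro exI[of _ 0]) simp
  define d where "d = min (1/2) (h/2)"
  have d: "d > 0" using hpos by (simp add: d_def)
  have near: "p \<in> Rect" if "dist p x0 < d" "Im p < h/2" "Im p > 0" for p
  proof -
    have "\<bar>Re p - Re x0\<bar> < d" using abs_Re_le_cmod[of "p - x0"] that by (simp add: dist_norm)
    moreover have "d \<le> 1/2" by (simp add: d_def)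
    moreover have "Re x0 = D - 1/2" by (simp add: x0_def)
    ultimately have "D - 1 < Re p \<and> Re p < D" by (simp only: abs_less_iff) linarith
    then show ?thesis using that hpos by (auto simp: Rect_def)
  qed
  have "(g \<longlongrightarrow> c3) (at x0 within {p. Im p < Im x0})"
  proof (rule tendsto_eventually)
    show "eventually (\<lambda>p. g p = c3) (at x0 within {p. Im p < Im x0})"
      unfolding eventually_at
    proof (intro exI[of _ "min d (h/2)"] conjI ballI impI)
      fix p assume p: "p \<in> {p. Im p < Im x0}" "p \<noteq> x0 \<and> dist p x0 < min d (h/2)"
      have "\<bar>Im p - Im x0\<bar> < h/2" using abs_Im_le_cmod[of "p - x0"] p by (simp add: dist_norm)
      then have "Im p > 0" using p by (simp add: x0_def)
      then show "g p = c3" using near[of p] p c3 by (simp add: x0_def)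
    qed (use d hpos in auto)
  qed
  then have gm0: "gm x0 = c3" using tendsto_unique[OF nontriv_below dn[OF x0C]] by blast
  have "(g \<longlongrightarrow> c3) (at x0 within {p. Im p > Im x0})"
  proof (rule tendsto_eventually)
    show "eventually (\<lambda>p. g p = c3) (at x0 within {p. Im p > Im x0})"
      unfolding eventually_at
    proof (intro exI[of _ "min d (h/2)"] conjI ballI impI)
      fix p assume p: "p \<in> {p. Im p > Im x0}" "p \<noteq> x0 \<and> dist p x0 < min d (h/2)"
      have "\<bar>Im p - Im x0\<bar> < h/2" using abs_Im_le_cmod[of "p - x0"] p by (simp add: dist_norm)
      then have im: "Im p < h" "Im p > h/2" using p by (auto simp: x0_def)
      have "\<bar>Re p - Re x0\<bar> < d" using abs_Re_le_cmod[of "p - x0"] p by (simp add: dist_norm)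
      moreover have "d \<le> 1/2" by (simp add: d_def)
      moreover have "Re x0 = D - 1/2" by (simp add: x0_def)
      ultimately have "D - 1 < Re p \<and> Re p < D" by (simp only: abs_less_iff) linarith
      then have R: "p - \<tau> \<in> Rect" using im tau hpos by (auto simp: Rect_def)
      then have "p - \<tau> \<notin> C" using Rect_G by blast
      then have "g (p - \<tau> + \<tau>) = g (p - \<tau>)" by (rule pert)
      then show "g p = c3" using c3[OF R] by simp
    qed (use d hpos in auto)
  qed
  then have gp0: "gp x0 = c3" using tendsto_unique[OF nontriv_above up[OF x0C]] by blast
  have "c3 = c * c3" using jump[OF x0C] gm0 gp0 by simp
  then have "c3 = 0" using c1 by (metis mult_cancel_right2)
  have x1: "complex_of_real (D - 1/2) \<in> Rect" using hpos by (simp add: Rect_def)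
  have "k = 0" using k[of "complex_of_real (D - 1/2)"] Rect_G[OF x1] c3[OF x1] \<open>c3 = 0\<close> by simp
  then show ?thesis using k by simp
qed

end



lemma refl_filterlim_up:
  fixes a :: real and x :: complex
  shows "filterlim (\<lambda>p. complex_of_real a - p) (at (complex_of_real a - x) within {p. Im p < Im (complex_of_real a - x)}) (at x within {p. Im p > Im x})"
proof (subst filterlim_at, rule conjI)
  show "eventually (\<lambda>p. complex_of_real a - p \<in> {p. Im p < Im (complex_of_real a - x)} \<and> complex_of_real a - p \<noteq> complex_of_real a - x) (at x within {p. Im p > Im x})"
    unfolding eventually_at_filter by (intro always_eventually) auto
  show "((\<lambda>p. complex_of_real a - p) \<longlongrightarrow> complex_of_real a - x) (at x within {p. Im p > Im x})"
    by (intro tendsto_intros)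
qed

lemma refl_filterlim_dn:
  fixes a :: real and x :: complex
  shows "filterlim (\<lambda>p. complex_of_real a - p) (at (complex_of_real a - x) within {p. Im p > Im (complex_of_real a - x)}) (at x within {p. Im p < Im x})"
proof (subst filterlim_at, rule conjI)
  show "eventually (\<lambda>p. complex_of_real a - p \<in> {p. Im p > Im (complex_of_real a - x)} \<and> complex_of_real a - p \<noteq> complex_of_real a - x) (at x within {p. Im p < Im x})"
    unfolding eventually_at_filter by (intro always_eventually) auto
  show "((\<lambda>p. complex_of_real a - p) \<longlongrightarrow> complex_of_real a - x) (at x within {p. Im p < Im x})"
    by (intro tendsto_intros)
qed

context ell
begin

lemma PF:
  fixes u v up um vp vm :: "complex \<Rightarrow> complex" and s lu lv :: complex
  assumes holu: "u holomorphic_on (-C-P)" and holv: "v holomorphic_on (-C-P)"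
    and s: "s = 1 \<or> s = -1"
    and peru1: "\<And>p. p \<notin> C \<Longrightarrow> u (p + 1) = s * u p" and perut: "\<And>p. p \<notin> C \<Longrightarrow> u (p + \<tau>) = u p"
    and perv1: "\<And>p. p \<notin> C \<Longrightarrow> v (p + 1) = s * v p" and pervt: "\<And>p. p \<notin> C \<Longrightarrow> v (p + \<tau>) = v p"
    and limu: "(u \<longlongrightarrow> lu) (at (complex_of_real D))" and limv: "(v \<longlongrightarrow> lv) (at (complex_of_real D))"
    and cup: "continuous_on C up" and cum: "continuous_on C um"
    and cvp: "continuous_on C vp" and cvm: "continuous_on C vm"
    and uup: "\<And>x. x \<in> C \<Longrightarrow> (u \<longlongrightarrow> up x) (at x within {p. Im p > Im x})"
    and udn: "\<And>x. x \<in> C \<Longrightarrow> (u \<longlongrightarrow> um x) (at x within {p. Im p < Im x})"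
    and vup: "\<And>x. x \<in> C \<Longrightarrow> (v \<longlongrightarrow> vp x) (at x within {p. Im p > Im x})"
    and vdn: "\<And>x. x \<in> C \<Longrightarrow> (v \<longlongrightarrow> vm x) (at x within {p. Im p < Im x})"
    and j1: "\<And>x. x \<in> C \<Longrightarrow> up x = - vm x" and j2: "\<And>x. x \<in> C \<Longrightarrow> vp x = um x"
  shows "\<forall>p. p \<notin> C \<longrightarrow> p \<notin> P \<longrightarrow> u p = 0 \<and> v p = 0"
proof -
  have s4: "s ^ 4 = 1" using s by auto
  have g1: "\<forall>p. p \<notin> C \<longrightarrow> p \<notin> P \<longrightarrow> u p + \<i> * v p = 0"
  proof (rule LI[where \<epsilon> = s and c = \<i> and gp = "\<lambda>x. up x + \<i> * vp x" and gm = "\<lambda>x. um x + \<i> * vm x"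
        and l = "lu + \<i> * lv"])
    show "(\<lambda>p. u p + \<i> * v p) holomorphic_on - C - P" using holu holv by (intro holomorphic_intros)
    show "u (p + 1) + \<i> * v (p + 1) = s * (u p + \<i> * v p)" if "p \<notin> C" for p
      using peru1[OF that] perv1[OF that] by (simp add: algebra_simps)
    show "u (p + \<tau>) + \<i> * v (p + \<tau>) = u p + \<i> * v p" if "p \<notin> C" for p
      using perut[OF that] pervt[OF that] by simp
    show "up x + \<i> * vp x = \<i> * (um x + \<i> * vm x)" if "x \<in> C" for x
      using j1[OF that] j2[OF that] by (simp add: algebra_simps)
    show "\<i> ^ 4 = 1" by (simp add: power4_eq_xxxx)
  qed (use s4 limu limv cup cum cvp cvm uup udn vup vdn in \<open>auto intro!: tendsto_intros continuous_intros\<close>)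
  have g2: "\<forall>p. p \<notin> C \<longrightarrow> p \<notin> P \<longrightarrow> u p - \<i> * v p = 0"
  proof (rule LI[where \<epsilon> = s and c = "- \<i>" and gp = "\<lambda>x. up x - \<i> * vp x" and gm = "\<lambda>x. um x - \<i> * vm x"
        and l = "lu - \<i> * lv"])
    show "(\<lambda>p. u p - \<i> * v p) holomorphic_on - C - P" using holu holv by (intro holomorphic_intros)
    show "u (p + 1) - \<i> * v (p + 1) = s * (u p - \<i> * v p)" if "p \<notin> C" for p
      using peru1[OF that] perv1[OF that] by (simp add: algebra_simps)
    show "u (p + \<tau>) - \<i> * v (p + \<tau>) = u p - \<i> * v p" if "p \<notin> C" for p
      using perut[OF that] pervt[OF that] by simp
    show "up x - \<i> * vp x = - \<i> * (um x - \<i> * vm x)" if "x \<in> C" for x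
      using j1[OF that] j2[OF that] by (simp add: algebra_simps)
    show "(- \<i>) ^ 4 = 1" by (simp add: power4_eq_xxxx)
    show "- \<i> \<noteq> 1" by (simp add: complex_eq_iff)
  qed (use s4 limu limv cup cum cvp cvm uup udn vup vdn in \<open>auto intro!: tendsto_intros continuous_intros\<close>)
  show ?thesis
  proof (intro allI impI)
    fix p assume p: "p \<notin> C" "p \<notin> P"
    have a: "u p + \<i> * v p = 0" "u p - \<i> * v p = 0" using g1 g2 p by auto
    have "2 * u p = (u p + \<i> * v p) + (u p - \<i> * v p)" by simp
    then have "u p = 0" using a by simp
    then show "u p = 0 \<and> v p = 0" using a by simp
  qed
qed


lemma convex_band: "convex (band k)"
proof -
  have eq: "band k = {x. inner \<i> x > of_int k * h} \<inter> {x. inner \<i> x < (of_int k + 1) * h}"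
    by (auto simp: band_def)
  show ?thesis unfolding eq by (intro convex_Int convex_halfspace_lt convex_halfspace_gt)
qed

lemma hol_refl:
  fixes f :: "complex \<Rightarrow> complex"
  assumes "f holomorphic_on S" "\<And>p. p \<in> T \<Longrightarrow> complex_of_real (2*D) - p \<in> S"
  shows "(\<lambda>p. f (complex_of_real (2*D) - p)) holomorphic_on T"
proof -
  have "(f \<circ> (\<lambda>p. complex_of_real (2*D) - p)) holomorphic_on T"
    by (rule holomorphic_on_compose) (use assms in \<open>auto intro: holomorphic_intros holomorphic_on_subset\<close>)
  then show ?thesis by (simp add: o_def)
qed

lemma RL:
  fixes u v up um vp vm :: "complex \<Rightarrow> complex" and s :: complex
  assumes holu: "u holomorphic_on (-C-P)" and holv: "v holomorphic_on (-C)"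
    and s: "s = 1 \<or> s = -1"
    and peru1: "\<And>p. p \<notin> C \<Longrightarrow> u (p + 1) = s * u p" and perut: "\<And>p. p \<notin> C \<Longrightarrow> u (p + \<tau>) = u p"
    and perv1: "\<And>p. p \<notin> C \<Longrightarrow> v (p + 1) = s * v p" and pervt: "\<And>p. p \<notin> C \<Longrightarrow> v (p + \<tau>) = v p"
    and col1: "u \<in> O[at (complex_of_real D)](\<lambda>p. 1 / (p - complex_of_real D))"
    and col2: "v \<in> O[at (complex_of_real D)](\<lambda>p. p - complex_of_real D)"
    and cup: "continuous_on C up" and cum: "continuous_on C um"
    and cvp: "continuous_on C vp" and cvm: "continuous_on C vm"
    and uup: "\<And>x. x \<in> C \<Longrightarrow> (u \<longlongrightarrow> up x) (at x within {p. Im p > Im x})"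
    and udn: "\<And>x. x \<in> C \<Longrightarrow> (u \<longlongrightarrow> um x) (at x within {p. Im p < Im x})"
    and vup: "\<And>x. x \<in> C \<Longrightarrow> (v \<longlongrightarrow> vp x) (at x within {p. Im p > Im x})"
    and vdn: "\<And>x. x \<in> C \<Longrightarrow> (v \<longlongrightarrow> vm x) (at x within {p. Im p < Im x})"
    and j1: "\<And>x. x \<in> C \<Longrightarrow> up x = - vm x" and j2: "\<And>x. x \<in> C \<Longrightarrow> vp x = um x"
  shows "\<forall>p. p \<notin> C \<longrightarrow> p \<notin> P \<longrightarrow> u p = 0 \<and> v p = 0"
proof -
  define d0 where "d0 = complex_of_real D"
  define \<rho> where "\<rho> = (\<lambda>p::complex. complex_of_real (2*D) - p)"
  have \<rho>d0: "\<rho> d0 = d0" by (simp add: \<rho>_def d0_def)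
  have \<rho>C: "\<rho> p \<in> C \<longleftrightarrow> p \<in> C" for p unfolding \<rho>_def by (rule C_refl)
  have \<rho>P: "\<rho> p \<in> P \<longleftrightarrow> p \<in> P" for p unfolding \<rho>_def by (rule P_refl)
  have \<rho>\<rho>: "\<rho> (\<rho> p) = p" for p by (simp add: \<rho>_def)
  have \<rho>d: "\<rho> p - d0 = d0 - p" for p by (simp add: \<rho>_def d0_def)
  have d0P: "d0 \<in> P" using D_in_P by (simp add: d0_def)
  have d0C: "d0 \<notin> C" using D_notin_C by (simp add: d0_def)
  have ballsub: "ball d0 rr - {d0} \<subseteq> -C-P" using ball_P[OF d0P] by blast
  have \<rho>ball: "\<rho> p \<in> ball d0 rr" if "p \<in> ball d0 rr" for p
    using that \<rho>d[of p] by (simp add: dist_norm norm_minus_commute)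
  have \<rho>ne: "\<rho> p \<noteq> d0" if "p \<noteq> d0" for p using that \<rho>d[of p] by auto
  have evball: "eventually (\<lambda>p. p \<in> ball d0 rr - {d0}) (at d0)"
    using rr_pos by (intro eventually_at_in_open) auto
  have \<rho>tend0: "(\<rho> \<longlongrightarrow> \<rho> d0) (at d0)"
    unfolding \<rho>_def by (intro tendsto_intros)
  then have \<rho>tend: "(\<rho> \<longlongrightarrow> d0) (at d0)" using \<rho>d0 by simp
  have \<rho>deriv: "(\<rho> has_field_derivative -1) (at d0)"
    unfolding \<rho>_def by (auto intro!: derivative_eq_intros)
  have "\<exists>B. eventually (\<lambda>z. norm ((z - d0) * u z) \<le> B) (at d0)"
  proof -
    obtain c where c: "c > 0" "eventually (\<lambda>z. norm (u z) \<le> c * norm (1 / (z - d0))) (at d0)"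
      using col1 unfolding d0_def by (elim landau_o.bigE) auto
    have "eventually (\<lambda>z. z \<noteq> d0) (at d0)" by (simp add: eventually_at_filter)
    with c(2) have "eventually (\<lambda>z. norm ((z - d0) * u z) \<le> c) (at d0)"
    proof eventually_elim
      case (elim z)
      then have "norm (z - d0) * norm (u z) \<le> norm (z - d0) * (c * norm (1 / (z - d0)))"
        by (intro mult_left_mono) auto
      also have "\<dots> = c" using elim by (simp add: norm_divide)
      finally show ?case by (simp add: norm_mult)
    qed
    then show ?thesis by blast
  qed
  moreover have "(\<lambda>z. (z - d0) * u z) holomorphic_on (ball d0 rr - {d0})"
    using holomorphic_on_subset[OF holu ballsub] by (intro holomorphic_intros)
  moreover have "d0 \<in> interior (ball d0 rr)" using rr_pos by simp
  ultimately obtain Uh where Uh: "Uh holomorphic_on ball d0 rr" "\<And>z. z \<in> ball d0 rr - {d0} \<Longrightarrow> Uh z = (z - d0) * u z"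
    using holomorphic_on_extend_bounded[of "\<lambda>z. (z - d0) * u z" "ball d0 rr" d0] by blast
  define R where "R = Uh d0"
  have uUh: "u z = Uh z / (z - d0)" if "z \<in> ball d0 rr - {d0}" for z using Uh(2)[OF that] that by auto
  have Uhcont: "(Uh \<longlongrightarrow> R) (at d0)"
    using holomorphic_on_imp_continuous_on[OF Uh(1)] rr_pos
    by (auto simp: continuous_on_eq_continuous_at isCont_def R_def)
  have "Uh field_differentiable (at d0)"
    by (rule holomorphic_on_imp_differentiable_at[OF Uh(1)]) (use rr_pos in auto)
  then obtain U1 where U1: "(Uh has_field_derivative U1) (at d0)"
    unfolding field_differentiable_def by blast
  have vcont_all: "isCont v z" if "z \<notin> C" for z
    using holomorphic_on_imp_continuous_on[OF holv] closed_C that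
    by (auto simp: continuous_on_eq_continuous_at open_Compl)
  have vcont: "(v \<longlongrightarrow> v d0) (at d0)" using vcont_all[OF d0C] by (simp add: isCont_def)
  have v0: "v d0 = 0"
  proof -
    obtain c where c: "c > 0" "eventually (\<lambda>z. norm (v z) \<le> c * norm (z - d0)) (at d0)"
      using col2 unfolding d0_def by (elim landau_o.bigE) auto
    have "((\<lambda>z. c * norm (z - d0)) \<longlongrightarrow> c * norm (d0 - d0)) (at d0)" by (intro tendsto_intros)
    then have "((\<lambda>z. c * norm (z - d0)) \<longlongrightarrow> 0) (at d0)" by simp
    then have "(v \<longlongrightarrow> 0) (at d0)" by (rule Lim_null_comparison[OF c(2)])
    then show ?thesis using tendsto_unique[OF at_neq_bot vcont] by simp
  qed
  have "v field_differentiable (at d0)"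
    by (rule holomorphic_on_imp_differentiable_at[OF holv]) (use closed_C d0C in auto)
  then obtain V1 where V1: "(v has_field_derivative V1) (at d0)"
    unfolding field_differentiable_def by blast
  have ab0: "\<forall>p. p \<notin> C \<longrightarrow> p \<notin> P \<longrightarrow> u p + u (\<rho> p) = 0 \<and> v p - v (\<rho> p) = 0"
  proof (rule PF[where s = s and up = "\<lambda>x. up x + um (\<rho> x)" and um = "\<lambda>x. um x + up (\<rho> x)"
        and vp = "\<lambda>x. vp x - vm (\<rho> x)" and vm = "\<lambda>x. vm x - vp (\<rho> x)"
        and lu = "U1 - U1 * (-1)" and lv = "v d0 - v d0"])
    show "(\<lambda>p. u p + u (\<rho> p)) holomorphic_on - C - P"
      using holu hol_refl[OF holu, of "-C-P"] \<rho>C \<rho>P unfolding \<rho>_def by (intro holomorphic_intros) auto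
    have holv': "v holomorphic_on -C-P" using holv by (rule holomorphic_on_subset) auto
    show "(\<lambda>p. v p - v (\<rho> p)) holomorphic_on - C - P"
      using holv' hol_refl[OF holv', of "-C-P"] \<rho>C \<rho>P unfolding \<rho>_def by (intro holomorphic_intros) auto
    show "s = 1 \<or> s = -1" by (rule s)
    have ss: "s * s = 1" using s by auto
    show "u (p + 1) + u (\<rho> (p + 1)) = s * (u p + u (\<rho> p))" if p: "p \<notin> C" for p
    proof -
      have q: "\<rho> p - 1 \<notin> C" using p \<rho>C C_minus1 by simp
      have "u (\<rho> p - 1 + 1) = s * u (\<rho> p - 1)" by (rule peru1[OF q])
      then have "u (\<rho> p - 1) = s * u (\<rho> p)" using ss by (simp add: mult.assoc[symmetric])
      moreover have "\<rho> (p + 1) = \<rho> p - 1" by (simp add: \<rho>_def)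
      ultimately show ?thesis using peru1[OF p] by (simp add: distrib_left)
    qed
    show "v (p + 1) - v (\<rho> (p + 1)) = s * (v p - v (\<rho> p))" if p: "p \<notin> C" for p
    proof -
      have q: "\<rho> p - 1 \<notin> C" using p \<rho>C C_minus1 by simp
      have "v (\<rho> p - 1 + 1) = s * v (\<rho> p - 1)" by (rule perv1[OF q])
      then have "v (\<rho> p - 1) = s * v (\<rho> p)" using ss by (simp add: mult.assoc[symmetric])
      moreover have "\<rho> (p + 1) = \<rho> p - 1" by (simp add: \<rho>_def)
      ultimately show ?thesis using perv1[OF p] by (simp add: right_diff_distrib)
    qed
    show "u (p + \<tau>) + u (\<rho> (p + \<tau>)) = u p + u (\<rho> p)" if p: "p \<notin> C" for p
    proof -
      have q: "\<rho> p - \<tau> \<notin> C" using p \<rho>C C_minustau by simp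
      have "u (\<rho> p - \<tau> + \<tau>) = u (\<rho> p - \<tau>)" by (rule perut[OF q])
      moreover have "\<rho> (p + \<tau>) = \<rho> p - \<tau>" by (simp add: \<rho>_def)
      ultimately show ?thesis using perut[OF p] by simp
    qed
    show "v (p + \<tau>) - v (\<rho> (p + \<tau>)) = v p - v (\<rho> p)" if p: "p \<notin> C" for p
    proof -
      have q: "\<rho> p - \<tau> \<notin> C" using p \<rho>C C_minustau by simp
      have "v (\<rho> p - \<tau> + \<tau>) = v (\<rho> p - \<tau>)" by (rule pervt[OF q])
      moreover have "\<rho> (p + \<tau>) = \<rho> p - \<tau>" by (simp add: \<rho>_def)
      ultimately show ?thesis using pervt[OF p] by simp
    qed
    show "((\<lambda>p. u p + u (\<rho> p)) \<longlongrightarrow> U1 - U1 * (-1)) (at (complex_of_real D))"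
    proof -
      have dA: "((\<lambda>p. Uh p - Uh (\<rho> p)) has_field_derivative U1 - U1 * (-1)) (at d0)"
        by (intro derivative_intros U1 DERIV_chain2[where f = Uh] \<rho>deriv) (use U1 \<rho>d0 in simp)
      then have "((\<lambda>p. ((Uh p - Uh (\<rho> p)) - (Uh d0 - Uh (\<rho> d0))) / (p - d0)) \<longlongrightarrow> U1 - U1 * (-1)) (at d0)"
        by (simp add: has_field_derivative_iff)
      moreover have "eventually (\<lambda>p. ((Uh p - Uh (\<rho> p)) - (Uh d0 - Uh (\<rho> d0))) / (p - d0) = u p + u (\<rho> p)) (at d0)"
        using evball
      proof eventually_elim
        case (elim p)
        have r: "\<rho> p \<in> ball d0 rr - {d0}" using elim \<rho>ball \<rho>ne by auto
        have "u p + u (\<rho> p) = Uh p / (p - d0) + Uh (\<rho> p) / (d0 - p)"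
          using uUh[OF elim] uUh[OF r] \<rho>d[of p] by simp
        also have "\<dots> = (Uh p - Uh (\<rho> p)) / (p - d0)"
        proof -
          have ne: "p - d0 \<noteq> 0" using elim by auto
          have "Uh (\<rho> p) / (d0 - p) = - (Uh (\<rho> p) / (p - d0))"
            by (metis minus_diff_eq divide_minus_right)
          then show ?thesis by (simp add: diff_divide_distrib)
        qed
        finally show ?case using \<rho>d0 by simp
      qed
      ultimately show ?thesis unfolding d0_def by (rule Lim_transform_eventually)
    qed
    show "((\<lambda>p. v p - v (\<rho> p)) \<longlongrightarrow> v d0 - v d0) (at (complex_of_real D))"
      unfolding d0_def[symmetric]
      by (intro tendsto_intros vcont isCont_tendsto_compose[where g = v and l = d0, OF vcont_all[OF d0C]] \<rho>tend)
    have cC: "continuous_on C f \<Longrightarrow> continuous_on C (\<lambda>x. f (\<rho> x))" for f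
    proof -
      assume f: "continuous_on C f"
      have c\<rho>: "continuous_on C \<rho>" unfolding \<rho>_def by (intro continuous_intros)
      have "\<rho> ` C \<subseteq> C" using \<rho>C by auto
      then show ?thesis by (rule continuous_on_compose2[OF f c\<rho>])
    qed
    show "continuous_on C (\<lambda>x. up x + um (\<rho> x))" using cup cC[OF cum] by (intro continuous_intros)
    show "continuous_on C (\<lambda>x. um x + up (\<rho> x))" using cum cC[OF cup] by (intro continuous_intros)
    show "continuous_on C (\<lambda>x. vp x - vm (\<rho> x))" using cvp cC[OF cvm] by (intro continuous_intros)
    show "continuous_on C (\<lambda>x. vm x - vp (\<rho> x))" using cvm cC[OF cvp] by (intro continuous_intros)
    have rup: "((\<lambda>p. f (\<rho> p)) \<longlongrightarrow> l) (at x within {p. Im p > Im x})"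
      if "(f \<longlongrightarrow> l) (at (\<rho> x) within {p. Im p < Im (\<rho> x)})" for f :: "complex \<Rightarrow> complex" and l x
      using filterlim_compose[OF that[unfolded \<rho>_def] refl_filterlim_up[of "2*D" x]] by (simp add: \<rho>_def)
    have rdn: "((\<lambda>p. f (\<rho> p)) \<longlongrightarrow> l) (at x within {p. Im p < Im x})"
      if "(f \<longlongrightarrow> l) (at (\<rho> x) within {p. Im p > Im (\<rho> x)})" for f :: "complex \<Rightarrow> complex" and l x
      using filterlim_compose[OF that[unfolded \<rho>_def] refl_filterlim_dn[of "2*D" x]] by (simp add: \<rho>_def)
    show "((\<lambda>p. u p + u (\<rho> p)) \<longlongrightarrow> up x + um (\<rho> x)) (at x within {p. Im p > Im x})" if x: "x \<in> C" for x
      using x \<rho>C by (intro tendsto_intros uup rup udn) auto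
    show "((\<lambda>p. u p + u (\<rho> p)) \<longlongrightarrow> um x + up (\<rho> x)) (at x within {p. Im p < Im x})" if x: "x \<in> C" for x
      using x \<rho>C by (intro tendsto_intros udn rdn uup) auto
    show "((\<lambda>p. v p - v (\<rho> p)) \<longlongrightarrow> vp x - vm (\<rho> x)) (at x within {p. Im p > Im x})" if x: "x \<in> C" for x
      using x \<rho>C by (intro tendsto_intros vup rup vdn) auto
    show "((\<lambda>p. v p - v (\<rho> p)) \<longlongrightarrow> vm x - vp (\<rho> x)) (at x within {p. Im p < Im x})" if x: "x \<in> C" for x
      using x \<rho>C by (intro tendsto_intros vdn rdn vup) auto
    show "up x + um (\<rho> x) = - (vm x - vp (\<rho> x))" if x: "x \<in> C" for x
      using j1[OF x] j2[of "\<rho> x"] x \<rho>C by simp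
    show "vp x - vm (\<rho> x) = um x + up (\<rho> x)" if x: "x \<in> C" for x
      using j2[OF x] j1[of "\<rho> x"] x \<rho>C by simp
  qed
  have V10: "V1 = 0"
  proof -
    have d1: "((\<lambda>p. v (\<rho> p)) has_field_derivative V1 * (-1)) (at d0)"
      by (rule DERIV_chain2[where f = v, OF _ \<rho>deriv]) (use V1 \<rho>d0 in simp)
    have "(v has_field_derivative V1 * (-1)) (at d0)"
    proof (rule has_field_derivative_transform_within_open[OF d1, of "ball d0 rr"])
      show "v (\<rho> x) = v x" if x: "x \<in> ball d0 rr" for x
      proof (cases "x = d0")
        case True then show ?thesis using \<rho>d0 by simp
      next
        case False
        then have "x \<notin> C" "x \<notin> P" using ballsub x by auto
        then show ?thesis using ab0 by auto
      qed
    qed (use rr_pos in auto)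
    then have "V1 = V1 * (-1)" using DERIV_unique[OF V1] by blast
    then show ?thesis by simp
  qed
  have vq: "((\<lambda>p. (v p - v d0) / (p - d0)) \<longlongrightarrow> 0) (at d0)"
    using V1 V10 by (simp add: has_field_derivative_iff)
  have uvlim: "((\<lambda>p. (u p * v p) ^ 2) \<longlongrightarrow> 0) (at d0)"
  proof -
    have "((\<lambda>p. (Uh p * ((v p - v d0) / (p - d0))) ^ 2) \<longlongrightarrow> (R * 0) ^ 2) (at d0)"
      by (intro tendsto_intros Uhcont vq)
    moreover have "eventually (\<lambda>p. (Uh p * ((v p - v d0) / (p - d0))) ^ 2 = (u p * v p) ^ 2) (at d0)"
      using evball
    proof eventually_elim
      case (elim p)
      then show ?case using uUh[OF elim] v0 by simp
    qed
    ultimately show ?thesis by (simp add: Lim_transform_eventually)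
  qed
  have "\<exists>k. \<forall>p. p \<notin> C \<longrightarrow> p \<notin> P \<longrightarrow> (u p * v p) ^ 2 = k"
  proof (rule LA[where fb = "\<lambda>x. (um x * vm x) ^ 2" and l = 0])
    have holv': "v holomorphic_on -C-P" using holv by (rule holomorphic_on_subset) auto
    show "(\<lambda>p. (u p * v p) ^ 2) holomorphic_on - C - P" using holu holv' by (intro holomorphic_intros)
    have ss: "s * s = 1" using s by auto
    show "(u (p + 1) * v (p + 1)) ^ 2 = (u p * v p) ^ 2" if p: "p \<notin> C" for p
    proof -
      have "(u (p + 1) * v (p + 1)) ^ 2 = ((s * s) * (u p * v p)) ^ 2"
        using peru1[OF p] perv1[OF p] by (simp add: algebra_simps)
      then show ?thesis using ss by simp
    qed
    show "(u (p + \<tau>) * v (p + \<tau>)) ^ 2 = (u p * v p) ^ 2" if p: "p \<notin> C" for p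
      using perut[OF p] pervt[OF p] by simp
    show "((\<lambda>p. (u p * v p) ^ 2) \<longlongrightarrow> 0) (at (complex_of_real D))" using uvlim by (simp add: d0_def)
    show "continuous_on C (\<lambda>x. (um x * vm x) ^ 2)" using cum cvm by (intro continuous_intros)
    show "((\<lambda>p. (u p * v p) ^ 2) \<longlongrightarrow> (um x * vm x) ^ 2) (at x within {p. Im p > Im x})" if x: "x \<in> C" for x
    proof -
      have "((\<lambda>p. (u p * v p) ^ 2) \<longlongrightarrow> (up x * vp x) ^ 2) (at x within {p. Im p > Im x})"
        using uup[OF x] vup[OF x] by (intro tendsto_intros)
      also have "(up x * vp x) ^ 2 = (um x * vm x) ^ 2" using j1[OF x] j2[OF x] by (simp add: algebra_simps)
      finally show ?thesis .
    qed
    show "((\<lambda>p. (u p * v p) ^ 2) \<longlongrightarrow> (um x * vm x) ^ 2) (at x within {p. Im p < Im x})" if x: "x \<in> C" for x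
      using udn[OF x] vdn[OF x] by (intro tendsto_intros)
  qed
  then obtain k where k: "\<And>p. p \<notin> C \<Longrightarrow> p \<notin> P \<Longrightarrow> (u p * v p) ^ 2 = k" by blast
  have "k = 0"
  proof -
    have "eventually (\<lambda>p. k = (u p * v p) ^ 2) (at d0)"
      using evball by eventually_elim (use ballsub k in auto)
    then have "((\<lambda>p. (u p * v p) ^ 2) \<longlongrightarrow> k) (at d0)" by (rule Lim_transform_eventually[OF tendsto_const])
    then show ?thesis using tendsto_unique[OF at_neq_bot _ uvlim] by blast
  qed
  then have uv0: "u p * v p = 0" if "p \<notin> C" "p \<notin> P" for p using k[OF that] by simp
  define S0 where "S0 = {p. - (h/2) < Im p \<and> Im p < h/2}"
  have S0C: "p \<in> S0 \<Longrightarrow> p \<notin> C" for p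
  proof
    assume p: "p \<in> S0" "p \<in> C"
    then obtain j::int where j: "Im p = (of_int j + 1/2) * h" by (auto simp: cuts_iff)
    have "(- 1/2) * h < (of_int j + 1/2) * h" "(of_int j + 1/2) * h < (1/2) * h" using p j by (auto simp: S0_def)
    then have "- 1/2 < real_of_int j + 1/2" "real_of_int j + 1/2 < 1/2" using hpos mult_less_cancel_right_pos by blast+
    then have "- 1 < real_of_int j" "real_of_int j < 0" by simp_all
    then show False using int_not_between[of "-1" j] by simp
  qed
  have R0: "R = 0"
  proof (rule ccontr)
    assume R: "R \<noteq> 0"
    have "eventually (\<lambda>p. Uh p \<noteq> 0) (at d0)" using tendsto_imp_eventually_ne[OF Uhcont R] .
    then have "eventually (\<lambda>p. v p = 0) (at d0)"
      using evball
    proof eventually_elim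
      case (elim p)
      then have "u p \<noteq> 0" using uUh[of p] by auto
      moreover have "p \<notin> C" "p \<notin> P" using elim ballsub by auto
      ultimately show ?case using uv0 by auto
    qed
    then obtain e where e: "e > 0" "\<And>p. p \<noteq> d0 \<Longrightarrow> dist p d0 < e \<Longrightarrow> v p = 0"
      unfolding eventually_at by auto
    define e' where "e' = min e (h/2)"
    have e': "e' > 0" using e hpos by (simp add: e'_def)
    have openS0: "open S0" unfolding S0_def by (intro open_Collect_conj open_Collect_less continuous_intros)
    have convS0: "convex S0"
    proof -
      have eq: "S0 = {x. inner \<i> x > - (h/2)} \<inter> {x. inner \<i> x < h/2}" by (auto simp: S0_def)
      show ?thesis unfolding eq by (intro convex_Int convex_halfspace_lt convex_halfspace_gt)
    qed
    have holvS0: "v holomorphic_on S0" by (rule holomorphic_on_subset[OF holv]) (use S0C in auto)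
    have ballS0: "ball d0 e' \<subseteq> S0"
    proof
      fix p assume "p \<in> ball d0 e'"
      then have "\<bar>Im p - Im d0\<bar> < h/2" using abs_Im_le_cmod[of "p - d0"] by (simp add: dist_norm norm_minus_commute e'_def)
      then have "\<bar>Im p\<bar> < h/2" by (simp add: d0_def)
      then have "Im p < h/2 \<and> - Im p < h/2" by (simp only: abs_less_iff)
      then show "p \<in> S0" by (auto simp: S0_def)
    qed
    have vS0: "v w = 0" if w: "w \<in> S0" for w
    proof (rule analytic_continuation[OF holvS0 openS0 convex_connected[OF convS0], of "ball d0 e' - {d0}" d0])
      show "ball d0 e' - {d0} \<subseteq> S0" using ballS0 by blast
      show "d0 \<in> S0" using ballS0 e' by auto
      show "d0 islimpt ball d0 e' - {d0}" using e' islimpt_punctured[of d0 "ball d0 e'"] islimpt_ball[of d0 d0 e'] by auto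
      show "v z = 0" if "z \<in> ball d0 e' - {d0}" for z using that e(2)[of z] by (auto simp: e'_def dist_commute)
    qed (rule w)
    have vS1: "v p = 0" if "h/2 < Im p" "Im p < 3*h/2" for p
    proof -
      have q: "p - \<tau> \<in> S0" using that tau by (simp add: S0_def)
      have "v (p - \<tau> + \<tau>) = v (p - \<tau>)" by (rule pervt[OF S0C[OF q]])
      then show ?thesis using vS0[OF q] by simp
    qed
    have bnd: "up x = 0 \<and> um x = 0" if x: "Im x = h/2" for x
    proof -
      have xC: "x \<in> C" unfolding cuts_iff using x by (intro exI[of _ 0]) simp
      have "(v \<longlongrightarrow> 0) (at x within {p. Im p < Im x})"
      proof (rule tendsto_eventually)
        show "eventually (\<lambda>p. v p = 0) (at x within {p. Im p < Im x})"
          unfolding eventually_at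
        proof (intro exI[of _ "h/2"] conjI ballI impI)
          fix p assume p: "p \<in> {p. Im p < Im x}" "p \<noteq> x \<and> dist p x < h/2"
          have "\<bar>Im p - Im x\<bar> < h/2" using abs_Im_le_cmod[of "p - x"] p by (simp add: dist_norm)
          then have "Im p - Im x < h/2 \<and> - (Im p - Im x) < h/2" by (simp only: abs_less_iff)
          then show "v p = 0" using p x by (intro vS0) (auto simp: S0_def)
        qed (use hpos in auto)
      qed
      then have vm0: "vm x = 0" using tendsto_unique[OF nontriv_below vdn[OF xC]] by blast
      have "(v \<longlongrightarrow> 0) (at x within {p. Im p > Im x})"
      proof (rule tendsto_eventually)
        show "eventually (\<lambda>p. v p = 0) (at x within {p. Im p > Im x})"
          unfolding eventually_at
        proof (intro exI[of _ "h/2"] conjI ballI impI)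
          fix p assume p: "p \<in> {p. Im p > Im x}" "p \<noteq> x \<and> dist p x < h/2"
          have "\<bar>Im p - Im x\<bar> < h/2" using abs_Im_le_cmod[of "p - x"] p by (simp add: dist_norm)
          then have "Im p - Im x < h/2 \<and> - (Im p - Im x) < h/2" by (simp only: abs_less_iff)
          then show "v p = 0" using p x by (intro vS1) auto
        qed (use hpos in auto)
      qed
      then have vp0: "vp x = 0" using tendsto_unique[OF nontriv_above vup[OF xC]] by blast
      show ?thesis using j1[OF xC] j2[OF xC] vm0 vp0 by simp
    qed
    have lineC: "x \<in> C \<Longrightarrow> x \<in> band 0 \<Longrightarrow> Im x = h/2" for x using band_C[of x 0] by simp
    have hol0: "(\<lambda>p. if p \<in> C then 0 else u p) holomorphic_on band 0"
    proof (rule paste_band[OF holu, where fb = "\<lambda>_. 0"])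
      show "(u \<longlongrightarrow> 0) (at x within {p. Im p > Im x})" if "x \<in> C" "x \<in> band 0" for x
        using uup[OF that(1)] bnd[OF lineC[OF that]] by simp
      show "(u \<longlongrightarrow> 0) (at x within {p. Im p < Im x})" if "x \<in> C" "x \<in> band 0" for x
        using udn[OF that(1)] bnd[OF lineC[OF that]] by simp
    qed auto
    define x0 where "x0 = \<i> * of_real (h/2)"
    have x0b: "x0 \<in> band 0" using hpos by (simp add: band_def x0_def)
    have lineb: "{p. Im p = h/2} \<subseteq> band 0" using hpos by (auto simp: band_def)
    have u0: "(if w \<in> C then 0 else u w) = 0" if w: "w \<in> band 0" for w
    proof (rule analytic_continuation[OF hol0 open_band convex_connected[OF convex_band], of "{p. Im p = h/2}" x0])
      show "{p. Im p = h/2} \<subseteq> band 0" by (rule lineb)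
      show "x0 \<in> band 0" by (rule x0b)
      show "x0 islimpt {p. Im p = h/2}"
        unfolding islimpt_approachable
      proof (intro allI impI)
        fix e :: real assume e: "e > 0"
        show "\<exists>x'\<in>{p. Im p = h/2}. x' \<noteq> x0 \<and> dist x' x0 < e"
          by (rule bexI[of _ "x0 + of_real (e/2)"]) (use e in \<open>auto simp: dist_norm x0_def\<close>)
      qed
      show "(if z \<in> C then 0 else u z) = 0" if "z \<in> {p. Im p = h/2}" for z
      proof -
        have "z \<in> C" unfolding cuts_iff using that by (intro exI[of _ 0]) simp
        then show ?thesis by simp
      qed
    qed (rule w)
    have "(Uh \<longlongrightarrow> 0) (at d0 within {p. Im p > Im d0})"
    proof (rule tendsto_eventually)
      show "eventually (\<lambda>p. Uh p = 0) (at d0 within {p. Im p > Im d0})"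
        unfolding eventually_at
      proof (intro exI[of _ "min rr (h/2)"] conjI ballI impI)
        fix p assume p: "p \<in> {p. Im p > Im d0}" "p \<noteq> d0 \<and> dist p d0 < min rr (h/2)"
        have "\<bar>Im p - Im d0\<bar> < h/2" using abs_Im_le_cmod[of "p - d0"] p by (simp add: dist_norm)
        then have "Im p - Im d0 < h/2 \<and> - (Im p - Im d0) < h/2" by (simp only: abs_less_iff)
        then have im: "0 < Im p" "Im p < h/2" using p by (auto simp: d0_def)
        then have pb: "p \<in> band 0" by (simp add: band_def)
        have pC: "p \<notin> C" using lineC[OF _ pb] im by auto
        have "u p = 0" using u0[OF pb] pC by simp
        moreover have "p \<in> ball d0 rr - {d0}" using p by (auto simp: dist_commute)
        ultimately show "Uh p = 0" using Uh(2) by simp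
      qed (use hpos rr_pos in auto)
    qed
    moreover have "(Uh \<longlongrightarrow> R) (at d0 within {p. Im p > Im d0})"
      using Uhcont by (rule tendsto_within_subset) auto
    ultimately have "R = 0" using tendsto_unique[OF nontriv_above] by blast
    then show False using R by simp
  qed
  have ulim: "(u \<longlongrightarrow> U1) (at d0)"
  proof -
    have "((\<lambda>p. (Uh p - Uh d0) / (p - d0)) \<longlongrightarrow> U1) (at d0)" using U1 by (simp add: has_field_derivative_iff)
    moreover have "eventually (\<lambda>p. (Uh p - Uh d0) / (p - d0) = u p) (at d0)"
      using evball by eventually_elim (use uUh R0 in \<open>auto simp: R_def\<close>)
    ultimately show ?thesis by (rule Lim_transform_eventually)
  qed
  show ?thesis
  proof (rule PF[OF holu _ s peru1 perut perv1 pervt _ _ cup cum cvp cvm uup udn vup vdn j1 j2])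
    show "v holomorphic_on -C-P" using holv by (rule holomorphic_on_subset) auto
    show "(u \<longlongrightarrow> U1) (at (complex_of_real D))" using ulim by (simp add: d0_def)
    show "(v \<longlongrightarrow> v d0) (at (complex_of_real D))" using vcont by (simp add: d0_def)
  qed
qed

end



lemma jm1: "((A::complex^2^2) ** Jmat) $ i $ 1 = - A $ i $ 2"
  by (simp add: matrix_matrix_mult_def Jmat_def sum_2)
lemma jm2: "((A::complex^2^2) ** Jmat) $ i $ 2 = A $ i $ 1"
  by (simp add: matrix_matrix_mult_def Jmat_def sum_2)

theorem corollary3p10:
  fixes n :: nat and \<tau> :: complex and D :: real and M :: "complex \<Rightarrow> complex^2^2"
  assumes n: "n \<ge> 1"
    and tau: "Re \<tau> = 0" "Im \<tau> > 0"
    and D: "0 < D" "D < 1"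
    and per1: "\<And>p. p \<notin> cuts \<tau> \<Longrightarrow> M (p + 1) = ((-1::real) ^ (n - 1)) *\<^sub>R M p"
    and pertau: "\<And>p. p \<notin> cuts \<tau> \<Longrightarrow> M (p + \<tau>) = M p"
    and hol: "\<And>i j. (\<lambda>p. M p $ i $ j) holomorphic_on
               (- cuts \<tau> - (\<lambda>w. complex_of_real D + w) ` lattice \<tau>)"
    and hol2: "\<And>i. (\<lambda>p. M p $ i $ 2) holomorphic_on (- cuts \<tau>)"
    and col1: "\<And>i w. w \<in> lattice \<tau> \<Longrightarrow>
               (\<lambda>p. M p $ i $ 1) \<in> O[at (complex_of_real D + w)](\<lambda>p. 1 / (p - (complex_of_real D + w)))"
    and col2: "\<And>i w. w \<in> lattice \<tau> \<Longrightarrow>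
               (\<lambda>p. M p $ i $ 2) \<in> O[at (complex_of_real D + w)](\<lambda>p. p - (complex_of_real D + w))"
    and bv: "\<exists>Mp Mm :: complex \<Rightarrow> complex^2^2.
               continuous_on (cuts \<tau>) Mp \<and> continuous_on (cuts \<tau>) Mm \<and>
               (\<forall>x \<in> cuts \<tau>. (M \<longlongrightarrow> Mp x) (at x within {p. Im p > Im x}) \<and>
                              (M \<longlongrightarrow> Mm x) (at x within {p. Im p < Im x}) \<and>
                              Mp x = Mm x ** Jmat)"
  shows "\<forall>p. p \<notin> cuts \<tau> \<and> p \<notin> (\<lambda>w. complex_of_real D + w) ` lattice \<tau> \<longrightarrow> M p = 0"
proof -
  interpret ell \<tau> D using tau D by unfold_locales auto
  obtain Mp Mm :: "complex \<Rightarrow> complex^2^2" where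
    cMp: "continuous_on C Mp" and cMm: "continuous_on C Mm" and
    lim: "\<And>x. x \<in> C \<Longrightarrow> (M \<longlongrightarrow> Mp x) (at x within {p. Im p > Im x}) \<and>
                          (M \<longlongrightarrow> Mm x) (at x within {p. Im p < Im x}) \<and> Mp x = Mm x ** Jmat"
    using bv by blast
  define s :: complex where "s = complex_of_real ((-1::real) ^ (n - 1))"
  have s: "s = 1 \<or> s = -1" unfolding s_def by (cases "even (n - 1)") auto
  have lat0: "0 \<in> lattice \<tau>" unfolding lattice_def by (rule CollectI, rule exI[of _ 0], rule exI[of _ 0]) simp
  have row: "\<forall>p. p \<notin> C \<longrightarrow> p \<notin> P \<longrightarrow> M p $ i $ 1 = 0 \<and> M p $ i $ 2 = 0" for i
  proof (rule RL[where s = s and up = "\<lambda>x. Mp x $ i $ 1" and um = "\<lambda>x. Mm x $ i $ 1"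
        and vp = "\<lambda>x. Mp x $ i $ 2" and vm = "\<lambda>x. Mm x $ i $ 2"])
    show "(\<lambda>p. M p $ i $ 1) holomorphic_on - C - P" by (rule hol)
    show "(\<lambda>p. M p $ i $ 2) holomorphic_on - C" by (rule hol2)
    show "s = 1 \<or> s = -1" by (rule s)
    show "M (p + 1) $ i $ 1 = s * M p $ i $ 1" if "p \<notin> C" for p
    proof -
      have "M (p + 1) $ i $ 1 = ((-1::real) ^ (n - 1)) *\<^sub>R (M p $ i $ 1)" using per1[OF that] by simp
      then show ?thesis by (simp only: s_def scaleR_conv_of_real)
    qed
    show "M (p + 1) $ i $ 2 = s * M p $ i $ 2" if "p \<notin> C" for p
    proof -
      have "M (p + 1) $ i $ 2 = ((-1::real) ^ (n - 1)) *\<^sub>R (M p $ i $ 2)" using per1[OF that] by simp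
      then show ?thesis by (simp only: s_def scaleR_conv_of_real)
    qed
    show "M (p + \<tau>) $ i $ 1 = M p $ i $ 1" if "p \<notin> C" for p using pertau[OF that] by simp
    show "M (p + \<tau>) $ i $ 2 = M p $ i $ 2" if "p \<notin> C" for p using pertau[OF that] by simp
    show "(\<lambda>p. M p $ i $ 1) \<in> O[at (complex_of_real D)](\<lambda>p. 1 / (p - complex_of_real D))"
      using col1[OF lat0, of i] by simp
    show "(\<lambda>p. M p $ i $ 2) \<in> O[at (complex_of_real D)](\<lambda>p. p - complex_of_real D)"
      using col2[OF lat0, of i] by simp
    show "continuous_on C (\<lambda>x. Mp x $ i $ 1)" using cMp by (intro continuous_intros)
    show "continuous_on C (\<lambda>x. Mm x $ i $ 1)" using cMm by (intro continuous_intros)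
    show "continuous_on C (\<lambda>x. Mp x $ i $ 2)" using cMp by (intro continuous_intros)
    show "continuous_on C (\<lambda>x. Mm x $ i $ 2)" using cMm by (intro continuous_intros)
    show "((\<lambda>p. M p $ i $ 1) \<longlongrightarrow> Mp x $ i $ 1) (at x within {p. Im p > Im x})" if "x \<in> C" for x
      using lim[OF that] by (intro tendsto_vec_nth) auto
    show "((\<lambda>p. M p $ i $ 1) \<longlongrightarrow> Mm x $ i $ 1) (at x within {p. Im p < Im x})" if "x \<in> C" for x
      using lim[OF that] by (intro tendsto_vec_nth) auto
    show "((\<lambda>p. M p $ i $ 2) \<longlongrightarrow> Mp x $ i $ 2) (at x within {p. Im p > Im x})" if "x \<in> C" for x
      using lim[OF that] by (intro tendsto_vec_nth) auto
    show "((\<lambda>p. M p $ i $ 2) \<longlongrightarrow> Mm x $ i $ 2) (at x within {p. Im p < Im x})" if "x \<in> C" for x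
      using lim[OF that] by (intro tendsto_vec_nth) auto
    show "Mp x $ i $ 1 = - Mm x $ i $ 2" if "x \<in> C" for x using lim[OF that] jm1 by simp
    show "Mp x $ i $ 2 = Mm x $ i $ 1" if "x \<in> C" for x using lim[OF that] jm2 by simp
  qed
  show ?thesis
  proof (intro allI impI)
    fix p assume p: "p \<notin> C \<and> p \<notin> P"
    have e: "M p $ i $ j = 0" for i j :: 2
      using exhaust_2[of j] row[of i] p by auto
    show "M p = 0" by (simp add: vec_eq_iff e)
  qed
qed



end
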